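(* Let $n,s$ be integers with $s \geq n > 0$. Let $Z_1^s,\dots,Z_n^s$ be independent random variables, each geometrically distributed with parameter $1/s$ on $\{1,2,3,\dots\}$ (i.e. $\mathbb{P}(Z_i^s=m)=(1-1/s)^{m-1}(1/s)$ for $m\ge 1$), and let $Y_n^s = \max_{1\le i\leq n} Z_i^s$. Then (1) if $n$ is even, $\mathbb{E}(Y_n^{s}) \leq \frac{n}{2}\cdot \frac{3s^2-2s}{2s-1}$; (2) if $n$ is odd, $\mathbb{E}(Y_n^{s}) \leq \frac{n}{2}\cdot \frac{3s^2-2s}{2s-1} + s$. *)

theory Defs
  imports "HOL-Probability.Probability"
begin

end

theory Submission
  imports Defs
begin

lemma (in prob_space) tail_nn:
  fixes X :: "'a \<Rightarrow> nat"
  assumes sets: "\<And>m. {x\<in>space M. m < X x} \<in> sets M"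
  shows "(\<integral>\<^sup>+x. ennreal (real (X x)) \<partial>M) = (\<Sum>m. emeasure M {x\<in>space M. m < X x})"
proof -
  have pt: "ennreal (real (X x)) = (\<Sum>m. indicator {x\<in>space M. m < X x} x)" if "x \<in> space M" for x
  proof -
    have "(\<Sum>m. indicator {x\<in>space M. m < X x} x :: ennreal) = (\<Sum>m\<in>{..<X x}. indicator {x\<in>space M. m < X x} x)"
      by (rule suminf_finite) (auto simp: indicator_def)
    also have "\<dots> = (\<Sum>m\<in>{..<X x}. 1)" using that by (intro sum.cong) (auto simp: indicator_def)
    also have "\<dots> = of_nat (X x)" by simp
    finally show ?thesis by (simp add: ennreal_of_nat_eq_real_of_nat)
  qed
  have "(\<integral>\<^sup>+x. ennreal (real (X x)) \<partial>M) = (\<integral>\<^sup>+x. (\<Sum>m. indicator {x\<in>space M. m < X x} x) \<partial>M)"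
    by (rule nn_integral_cong) (simp add: pt)
  also have "\<dots> = (\<Sum>m. \<integral>\<^sup>+x. indicator {x\<in>space M. m < X x} x \<partial>M)"
    by (rule nn_integral_suminf) (use sets in auto)
  also have "\<dots> = (\<Sum>m. emeasure M {x\<in>space M. m < X x})"
    using sets by simp
  finally show ?thesis .
qed

lemma Cval:
  fixes s :: nat and q :: real
  assumes "1 \<le> s" "q = 1 - 1 / real s"
  shows "2 / (1 - q) - 1 / (1 - q * q) = (3 * real s ^ 2 - 2 * real s) / (2 * real s - 1)"
proof -
  have s: "real s \<ge> 1" using assms by simp
  have h1: "2 / (1 - q) = 2 * real s" using assms s by simp
  have "1 - q * q = (2 * real s - 1) / real s ^ 2" using s unfolding assms(2)
    by (simp add: field_simps power2_eq_square)
  hence h2: "1 / (1 - q * q) = real s ^ 2 / (2 * real s - 1)" by simp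
  have "2 * real s - 1 > 0" using s by simp
  then show ?thesis unfolding h1 h2 by (simp add: field_simps power2_eq_square)
qed


theorem proposition5p1:
  fixes M :: "'a measure" and Z :: "nat \<Rightarrow> 'a \<Rightarrow> nat" and n s :: nat
  assumes "prob_space M"
    and "0 < n" and "n \<le> s"
    and indep: "prob_space.indep_vars M (\<lambda>_. count_space UNIV) Z {1..n}"
    and geom: "\<And>i m. i \<in> {1..n} \<Longrightarrow> m \<ge> 1 \<Longrightarrow>
       measure M {\<omega> \<in> space M. Z i \<omega> = m} = (1 - 1 / real s) ^ (m - 1) * (1 / real s)"
  defines "Y \<equiv> (\<lambda>\<omega>. Max ((\<lambda>i. Z i \<omega>) ` {1..n}))"
  shows "(even n \<longrightarrow> prob_space.expectation M (\<lambda>\<omega>. real (Y \<omega>))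
            \<le> real n / 2 * ((3 * real s ^ 2 - 2 * real s) / (2 * real s - 1)))
       \<and> (odd n \<longrightarrow> prob_space.expectation M (\<lambda>\<omega>. real (Y \<omega>))
            \<le> real n / 2 * ((3 * real s ^ 2 - 2 * real s) / (2 * real s - 1)) + real s)"
proof -
  interpret P: prob_space M by fact
  have s1: "1 \<le> s" using assms(2,3) by simp
  have sr: "real s \<ge> 1" using s1 by simp
  define q where "q = 1 - 1 / real s"
  have q0: "0 \<le> q" and q1: "q < 1" using sr unfolding q_def by (auto simp: field_simps)
  have meas: "Z i \<in> measurable M (count_space UNIV)" if "i \<in> {1..n}" for i
    using indep that unfolding P.indep_vars_def2 by auto
  have setsZ: "{x\<in>space M. m < Z i x} \<in> sets M" if "i \<in> {1..n}" for i m
  proof -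
    have "Z i -` {m<..} \<inter> space M \<in> sets M" using measurable_sets[OF meas[OF that]] by simp
    moreover have "Z i -` {m<..} \<inter> space M = {x\<in>space M. m < Z i x}" by auto
    ultimately show ?thesis by simp
  qed
  have setsE: "{x\<in>space M. Z i x = m} \<in> sets M" if "i \<in> {1..n}" for i m
  proof -
    have "Z i -` {m} \<inter> space M \<in> sets M" using measurable_sets[OF meas[OF that]] by simp
    moreover have "Z i -` {m} \<inter> space M = {x\<in>space M. Z i x = m}" by auto
    ultimately show ?thesis by simp
  qed
  have tail: "P.prob {x\<in>space M. m < Z i x} = q ^ m" if i: "i \<in> {1..n}" for i m
  proof -
    let ?A = "\<lambda>k. {x\<in>space M. Z i x = Suc (m + k)}"
    have "(\<lambda>k. P.prob (?A k)) sums P.prob (\<Union>k. ?A k)"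
      by (rule P.finite_measure_UNION) (auto simp: disjoint_family_on_def setsE[OF i])
    moreover have "(\<Union>k. ?A k) = {x\<in>space M. m < Z i x}"
    proof safe
      fix x assume "x \<in> space M" "m < Z i x"
      then show "x \<in> (\<Union>k. ?A k)" by (auto intro!: exI[of _ "Z i x - Suc m"])
    qed auto
    moreover have "P.prob (?A k) = q ^ m * (1 / real s) * q ^ k" for k
      using geom[OF i, of "Suc (m + k)"] unfolding q_def by (simp add: power_add)
    ultimately have "(\<lambda>k. q ^ m * (1 / real s) * q ^ k) sums P.prob {x\<in>space M. m < Z i x}"
      by simp
    moreover have "(\<lambda>k. q ^ m * (1 / real s) * q ^ k) sums (q ^ m * (1 / real s) * (1 / (1 - q)))"
      by (rule sums_mult) (rule geometric_sums, use q0 q1 in simp)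
    moreover have "q ^ m * (1 / real s) * (1 / (1 - q)) = q ^ m" using sr unfolding q_def by simp
    ultimately show ?thesis using sums_unique2 by metis
  qed
  have nnZ: "(\<integral>\<^sup>+x. ennreal (real (Z i x)) \<partial>M) = ennreal (real s)" if i: "i \<in> {1..n}" for i
  proof -
    have "(\<integral>\<^sup>+x. ennreal (real (Z i x)) \<partial>M) = (\<Sum>m. emeasure M {x\<in>space M. m < Z i x})"
      by (rule P.tail_nn) (rule setsZ[OF i])
    also have "\<dots> = (\<Sum>m. ennreal (q ^ m))"
      using tail[OF i] by (simp add: P.emeasure_eq_measure)
    also have "\<dots> = ennreal (\<Sum>m. q ^ m)"
      by (rule suminf_ennreal2) (use q0 q1 in auto)
    also have "(\<Sum>m. q ^ m) = real s"
      using suminf_geometric[of q] q0 q1 sr unfolding q_def by simp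
    finally show ?thesis .
  qed
  define C where "C = (3 * real s ^ 2 - 2 * real s) / (2 * real s - 1)"
  have C0: "C \<ge> 0" unfolding C_def using sr
    by (intro divide_nonneg_pos) (auto simp: power2_eq_square)
  have nnP: "(\<integral>\<^sup>+x. ennreal (real (max (Z a x) (Z b x))) \<partial>M) = ennreal C"
    if a: "a \<in> {1..n}" and b: "b \<in> {1..n}" and ab: "a \<noteq> b" for a b
  proof -
    let ?A = "\<lambda>m. {x\<in>space M. m < Z a x}" and ?B = "\<lambda>m. {x\<in>space M. m < Z b x}"
    have eqU: "{x\<in>space M. m < max (Z a x) (Z b x)} = ?A m \<union> ?B m" for m by auto
    have int: "P.prob (?A m \<inter> ?B m) = q ^ m * q ^ m" for m
    proof -
      have ind: "P.indep_sets (\<lambda>i. {Z i -` A \<inter> space M | A. A \<in> sets (count_space UNIV)}) {1..n}"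
        using indep unfolding P.indep_vars_def2 by auto
      let ?F = "\<lambda>j. Z j -` {m<..} \<inter> space M"
      have "P.prob (\<Inter>j\<in>{a,b}. ?F j) = (\<Prod>j\<in>{a,b}. P.prob (?F j))"
        by (rule P.indep_setsD[OF ind]) (use a b in auto)
      moreover have "?F j = {x\<in>space M. m < Z j x}" for j by auto
      ultimately have "P.prob (?A m \<inter> ?B m) = P.prob (?A m) * P.prob (?B m)"
        using ab by (simp add: Int_commute)
      then show ?thesis using tail[OF a] tail[OF b] by simp
    qed
    have un: "P.prob {x\<in>space M. m < max (Z a x) (Z b x)} = 2 * q ^ m - q ^ m * q ^ m" for m
    proof -
      have "P.prob (?A m \<union> ?B m) = P.prob (?A m) + P.prob (?B m) - P.prob (?A m \<inter> ?B m)"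
        by (rule measure_Un3) (auto simp: setsZ[OF a] setsZ[OF b] P.fmeasurable_eq_sets)
      then show ?thesis unfolding eqU int tail[OF a] tail[OF b] by simp
    qed
    have "(\<integral>\<^sup>+x. ennreal (real (max (Z a x) (Z b x))) \<partial>M)
        = (\<Sum>m. emeasure M {x\<in>space M. m < max (Z a x) (Z b x)})"
      by (rule P.tail_nn) (simp add: eqU setsZ[OF a] setsZ[OF b] sets.Un)
    also have "\<dots> = (\<Sum>m. ennreal (2 * q ^ m - q ^ m * q ^ m))"
      using un by (simp add: P.emeasure_eq_measure)
    also have sm: "(\<lambda>m. 2 * q ^ m - q ^ m * q ^ m) sums (2 * (1 / (1 - q)) - 1 / (1 - q * q))"
    proof -
      have "(\<lambda>m. 2 * q ^ m) sums (2 * (1 / (1 - q)))"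
        by (rule sums_mult) (rule geometric_sums, use q0 q1 in simp)
      moreover have "(\<lambda>m. (q * q) ^ m) sums (1 / (1 - q * q))"
        proof (rule geometric_sums)
        have "q * q \<le> q * 1" using q0 q1 by (intro mult_left_mono) auto
        then show "norm (q * q) < 1" using q0 q1 by simp
      qed
      ultimately show ?thesis by (simp add: power_mult_distrib sums_diff)
    qed
    have "(\<Sum>m. ennreal (2 * q ^ m - q ^ m * q ^ m)) = ennreal (\<Sum>m. 2 * q ^ m - q ^ m * q ^ m)"
    proof (rule suminf_ennreal2)
      fix m :: nat
      have "q ^ m \<le> 1" "0 \<le> q ^ m" using q0 q1 by (auto simp: power_le_one)
      moreover have "q ^ m * q ^ m \<le> q ^ m * 1" using \<open>q ^ m \<le> 1\<close> \<open>0 \<le> q ^ m\<close> by (intro mult_left_mono) auto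
      ultimately show "0 \<le> 2 * q ^ m - q ^ m * q ^ m" by simp
    qed (use sm in \<open>rule sums_summable\<close>)
    also have "(\<Sum>m. 2 * q ^ m - q ^ m * q ^ m) = C"
      using sums_unique[OF sm] Cval[OF s1 q_def] unfolding C_def by simp
    finally show ?thesis by simp
  qed
  define k where "k = n div 2"
  define R where "R = (\<lambda>x. (\<Sum>j<k. max (Z (2*j+1) x) (Z (2*j+2) x)) + (if odd n then Z n x else 0))"
  have pw: "Y x \<le> R x" for x
    unfolding Y_def
  proof (rule Max.boundedI)
    show "(\<lambda>i. Z i x) ` {1..n} \<noteq> {}" using \<open>0 < n\<close> by auto
  next
    fix y assume "y \<in> (\<lambda>i. Z i x) ` {1..n}"
    then obtain i where i: "i \<in> {1..n}" "y = Z i x" by auto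
    show "y \<le> R x"
    proof (cases "i \<le> 2 * k")
      case True
      define j where "j = (i - 1) div 2"
      have j: "j < k" using True i(1) unfolding j_def by auto
      have "i = 2*j+1 \<or> i = 2*j+2" using i(1) unfolding j_def by auto
      hence "Z i x \<le> max (Z (2*j+1) x) (Z (2*j+2) x)" by auto
      also have "\<dots> \<le> (\<Sum>j<k. max (Z (2*j+1) x) (Z (2*j+2) x))"
        by (rule member_le_sum[where f="\<lambda>j. max (Z (2*j+1) x) (Z (2*j+2) x)"]) (use j in auto)
      finally show ?thesis unfolding R_def i(2) by simp
    next
      case False
      then have "i = n" "odd n" using i(1) unfolding k_def by auto
      then show ?thesis unfolding R_def i(2) by simp
    qed
  qed simp
  have idx: "2*j+1 \<in> {1..n}" "2*j+2 \<in> {1..n}" if "j < k" for j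
    using that unfolding k_def by auto
  have "(\<integral>\<^sup>+x. ennreal (real (Y x)) \<partial>M) \<le> (\<integral>\<^sup>+x. ennreal (real (R x)) \<partial>M)"
    by (rule nn_integral_mono) (use pw in simp)
  also have "(\<integral>\<^sup>+x. ennreal (real (R x)) \<partial>M) =
     (\<integral>\<^sup>+x. (\<Sum>j<k. ennreal (real (max (Z (2*j+1) x) (Z (2*j+2) x)))) + (if odd n then ennreal (real (Z n x)) else 0) \<partial>M)"
  proof (rule nn_integral_cong)
    fix x
    have "ennreal (real (R x)) = of_nat (R x)" by (simp only: ennreal_of_nat_eq_real_of_nat)
    also have "\<dots> = (\<Sum>j<k. of_nat (max (Z (2*j+1) x) (Z (2*j+2) x))) + (if odd n then of_nat (Z n x) else 0)"
      unfolding R_def by (simp only: of_nat_add of_nat_sum) simp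
    also have "\<dots> = (\<Sum>j<k. ennreal (real (max (Z (2*j+1) x) (Z (2*j+2) x)))) + (if odd n then ennreal (real (Z n x)) else 0)"
      by (simp only: ennreal_of_nat_eq_real_of_nat)
    finally show "ennreal (real (R x)) = (\<Sum>j<k. ennreal (real (max (Z (2*j+1) x) (Z (2*j+2) x)))) + (if odd n then ennreal (real (Z n x)) else 0)" .
  qed
  also have "\<dots> = (\<integral>\<^sup>+x. (\<Sum>j<k. ennreal (real (max (Z (2*j+1) x) (Z (2*j+2) x)))) \<partial>M) + 
      (\<integral>\<^sup>+x. (if odd n then ennreal (real (Z n x)) else 0) \<partial>M)"
  proof (rule nn_integral_add)
    show "(\<lambda>x. \<Sum>j<k. ennreal (real (max (Z (2*j+1) x) (Z (2*j+2) x)))) \<in> borel_measurable M"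
      using meas idx by measurable
    show "(\<lambda>x. if odd n then ennreal (real (Z n x)) else 0) \<in> borel_measurable M"
      using meas[of n] \<open>0 < n\<close> by (cases "odd n") (simp_all, measurable)
  qed
  also have "(\<integral>\<^sup>+x. (\<Sum>j<k. ennreal (real (max (Z (2*j+1) x) (Z (2*j+2) x)))) \<partial>M)
      = (\<Sum>j<k. \<integral>\<^sup>+x. ennreal (real (max (Z (2*j+1) x) (Z (2*j+2) x))) \<partial>M)"
    by (rule nn_integral_sum) (use meas idx in measurable)
  also have "\<dots> = (\<Sum>j<k. ennreal C)"
    by (rule sum.cong) (use idx nnP in auto)
  also have "(\<integral>\<^sup>+x. (if odd n then ennreal (real (Z n x)) else 0) \<partial>M) = (if odd n then ennreal (real s) else 0)"
    using nnZ[of n] \<open>0 < n\<close> by simp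
  finally have b0: "(\<integral>\<^sup>+x. ennreal (real (Y x)) \<partial>M) \<le> (\<Sum>j<k. ennreal C) + (if odd n then ennreal (real s) else 0)" .
  have "(\<Sum>j<k. ennreal C) + (if odd n then ennreal (real s) else 0) = ennreal (real k * C + (if odd n then real s else 0))"
  proof -
    have "(\<Sum>j<k. ennreal C) = ennreal (real k * C)" using C0 by (simp add: ennreal_mult ennreal_of_nat_eq_real_of_nat)
    then show ?thesis using C0 by (cases "odd n") (simp_all add: ennreal_plus)
  qed
  with b0 have bound: "(\<integral>\<^sup>+x. ennreal (real (Y x)) \<partial>M) \<le> ennreal (real k * C + (if odd n then real s else 0))" by simp
  have E: "P.expectation (\<lambda>x. real (Y x)) \<le> real k * C + (if odd n then real s else 0)"
    by (rule integral_real_bounded) (use bound C0 in auto)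
  have "real k = real n / 2" if "even n" using that unfolding k_def by auto
  moreover have "real k \<le> real n / 2" unfolding k_def by linarith
  ultimately show ?thesis using E C0 unfolding C_def
    by (smt (verit, best) mult_right_mono)
qed
end
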